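(* Let $T=(V,E)$ be a tree with $\mathrm{pthin}(T)=2$, and let $\sigma$ be an ordering of $V$ and $S=\{V^0,V^1\}$ a partition of $V$ that are strongly consistent. Let $v_1,v_2,v_3$ be vertices with $v_1<v_2<v_3$ and $\deg(v_2)=3$. If a vertex $v_0$ is the nexus between $v_1,v_2,v_3$, then $v_0$ is adjacent to $v_2$.
   Context: For a graph $G=(V,E)$, a linear ordering $<$ of $V$ and a partition of $V$ into classes are called strongly consistent if for every triple $r<s<t$ of vertices with $rt\in E$: if $r$ and $s$ belong to the same class then $st\in E$, and if $s$ and $t$ belong to the same class then $rs\in E$. The proper thinness $\mathrm{pthin}(G)$ is the minimum $k$ such that some ordering and some partition into $k$ classes are strongly consistent. For distinct vertices $v_0,v_1,v_2,v_3$ of a tree $T$, let $C_i$ be the unique simple path from $v_0$ to $v_i$ ($i=1,2,3$) and $C_i'$ its vertex set minus $v_0$; $v_0$ is the nexus between $v_1,v_2,v_3$ if $C_1',C_2',C_3'$ are pairwise disjoint. *)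

theory Defs
  imports Main
begin

definition graph :: "'a set \<Rightarrow> ('a \<times> 'a) set \<Rightarrow> bool" where
  "graph V E \<longleftrightarrow> E \<subseteq> V \<times> V \<and> (\<forall>u v. (u,v) \<in> E \<longrightarrow> (v,u) \<in> E) \<and> (\<forall>v. (v,v) \<notin> E)"

definition is_path :: "'a set \<Rightarrow> ('a \<times> 'a) set \<Rightarrow> 'a list \<Rightarrow> bool" where
  "is_path V E p \<longleftrightarrow> p \<noteq> [] \<and> distinct p \<and> set p \<subseteq> V \<and>
     (\<forall>i. Suc i < length p \<longrightarrow> (p ! i, p ! Suc i) \<in> E)"

definition is_cycle :: "'a set \<Rightarrow> ('a \<times> 'a) set \<Rightarrow> 'a list \<Rightarrow> bool" where
  "is_cycle V E c \<longleftrightarrow> length c \<ge> 3 \<and> is_path V E c \<and> (last c, hd c) \<in> E"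

definition is_tree :: "'a set \<Rightarrow> ('a \<times> 'a) set \<Rightarrow> bool" where
  "is_tree V E \<longleftrightarrow> graph V E \<and> finite V \<and> V \<noteq> {} \<and>
     (\<forall>u\<in>V. \<forall>v\<in>V. \<exists>p. is_path V E p \<and> hd p = u \<and> last p = v) \<and>
     (\<nexists>c. is_cycle V E c)"

definition degree :: "('a \<times> 'a) set \<Rightarrow> 'a \<Rightarrow> nat" where
  "degree E v = card {u. (v,u) \<in> E}"

text \<open>An ordering of V is given by an injective map \<sigma> into nat (r < s iff \<sigma> r < \<sigma> s);
  a partition into k classes by a class map c with values in {..<k}.\<close>
definition strongly_consistent ::
  "'a set \<Rightarrow> ('a \<times> 'a) set \<Rightarrow> ('a \<Rightarrow> nat) \<Rightarrow> ('a \<Rightarrow> nat) \<Rightarrow> bool" where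
  "strongly_consistent V E \<sigma> c \<longleftrightarrow>
     (\<forall>r\<in>V. \<forall>s\<in>V. \<forall>t\<in>V. \<sigma> r < \<sigma> s \<and> \<sigma> s < \<sigma> t \<and> (r,t) \<in> E \<longrightarrow>
        (c r = c s \<longrightarrow> (s,t) \<in> E) \<and> (c s = c t \<longrightarrow> (r,s) \<in> E))"

definition pthin :: "'a set \<Rightarrow> ('a \<times> 'a) set \<Rightarrow> nat" where
  "pthin V E = (LEAST k. \<exists>\<sigma> c. inj_on \<sigma> V \<and> c ` V \<subseteq> {..<k} \<and> strongly_consistent V E \<sigma> c)"

definition tree_path_set :: "'a set \<Rightarrow> ('a \<times> 'a) set \<Rightarrow> 'a \<Rightarrow> 'a \<Rightarrow> 'a set" where
  "tree_path_set V E u v = set (THE p. is_path V E p \<and> hd p = u \<and> last p = v)"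

definition nexus :: "'a set \<Rightarrow> ('a \<times> 'a) set \<Rightarrow> 'a \<Rightarrow> 'a \<Rightarrow> 'a \<Rightarrow> 'a \<Rightarrow> bool" where
  "nexus V E v0 v1 v2 v3 \<longleftrightarrow>
     {v0,v1,v2,v3} \<subseteq> V \<and> distinct [v0,v1,v2,v3] \<and>
     (let C1 = tree_path_set V E v0 v1 - {v0};
          C2 = tree_path_set V E v0 v2 - {v0};
          C3 = tree_path_set V E v0 v3 - {v0}
      in C1 \<inter> C2 = {} \<and> C1 \<inter> C3 = {} \<and> C2 \<inter> C3 = {})"

end

theory Submission imports Defs begin

lemma graph_sym: "graph V E \<Longrightarrow> (u,v)\<in>E \<Longrightarrow> (v,u)\<in>E"
  by (simp add: graph_def)
lemma graph_V: "graph V E \<Longrightarrow> (u,v)\<in>E \<Longrightarrow> u\<in>V \<and> v\<in>V"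
  by (auto simp: graph_def)
lemma graph_irr: "graph V E \<Longrightarrow> (u,u)\<notin>E"
  by (simp add: graph_def)

lemma path_single[simp]: "is_path V E [x] \<longleftrightarrow> x\<in>V"
  by (simp add: is_path_def)

lemma path_Cons: "is_path V E (x#y#xs) \<longleftrightarrow> x\<in>V \<and> (x,y)\<in>E \<and> x \<notin> set (y#xs) \<and> is_path V E (y#xs)"
proof
  assume "is_path V E (x#y#xs)"
  then show "x\<in>V \<and> (x,y)\<in>E \<and> x \<notin> set (y#xs) \<and> is_path V E (y#xs)"
    unfolding is_path_def
  proof (intro conjI allI impI)
    fix i assume "Suc i < length (y#xs)"
    moreover have h: "\<forall>i. Suc i < length (x#y#xs) \<longrightarrow> ((x#y#xs) ! i, (x#y#xs) ! Suc i) \<in> E"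
      using \<open>is_path V E (x#y#xs)\<close> by (simp add: is_path_def)
    ultimately show "((y#xs) ! i, (y#xs) ! Suc i) \<in> E" using h[rule_format, of "Suc i"] by simp
  qed (use \<open>is_path V E (x#y#xs)\<close> in \<open>auto simp: is_path_def dest: spec[of _ 0]\<close>)
next
  assume a: "x\<in>V \<and> (x,y)\<in>E \<and> x \<notin> set (y#xs) \<and> is_path V E (y#xs)"
  show "is_path V E (x#y#xs)" unfolding is_path_def
  proof (intro conjI allI impI)
    fix i assume "Suc i < length (x#y#xs)"
    then show "((x#y#xs) ! i, (x#y#xs) ! Suc i) \<in> E"
      using a unfolding is_path_def by (cases i) auto
  qed (use a in \<open>auto simp: is_path_def\<close>)
qed

lemma path_append: "xs \<noteq> [] \<Longrightarrow> ys \<noteq> [] \<Longrightarrow>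
  is_path V E (xs @ ys) \<longleftrightarrow> is_path V E xs \<and> is_path V E ys \<and> set xs \<inter> set ys = {} \<and> (last xs, hd ys) \<in> E"
proof (induction xs)
  case Nil then show ?case by simp
next
  case (Cons x xs)
  show ?case
  proof (cases xs)
    case Nil
    with Cons.prems show ?thesis by (cases ys) (auto simp: path_Cons)
  next
    case (Cons z zs)
    with Cons.IH[of] Cons.prems show ?thesis
      by (auto simp: path_Cons)
  qed
qed

lemma path_rev: "graph V E \<Longrightarrow> is_path V E xs \<Longrightarrow> is_path V E (rev xs)"
proof (induction xs)
  case Nil then show ?case by (simp add: is_path_def)
next
  case (Cons x xs)
  show ?case
  proof (cases xs)
    case Nil with Cons show ?thesis by simp
  next
    case (Cons y ys)
    have "is_path V E (rev xs)" using Cons.IH Cons.prems \<open>xs = y#ys\<close> path_Cons by metis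
    moreover have "(x,y) \<in> E" "x \<notin> set xs" "x \<in> V" using Cons.prems \<open>xs = y#ys\<close> path_Cons by metis+
    ultimately show ?thesis using path_append[of "rev xs" "[x]" V E] \<open>xs = y#ys\<close> graph_sym[OF Cons.prems(1)]
      by (simp add: last_rev)
  qed
qed

lemma path_prefix: "is_path V E (xs @ ys) \<Longrightarrow> xs \<noteq> [] \<Longrightarrow> is_path V E xs"
  using path_append by (cases "ys = []") auto

lemma path_suffix: "is_path V E (xs @ ys) \<Longrightarrow> ys \<noteq> [] \<Longrightarrow> is_path V E ys"
  using path_append by (cases "xs = []") auto

lemma distinct_hd_last: "distinct q \<Longrightarrow> q \<noteq> [] \<Longrightarrow> hd q = last q \<Longrightarrow> q = [hd q]"
  by (cases q) (auto, metis last_in_set)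

lemma path_unique:
  assumes G: "graph V E" and noc: "\<nexists>c. is_cycle V E c"
  shows "is_path V E p \<Longrightarrow> is_path V E q \<Longrightarrow> hd p = hd q \<Longrightarrow> last p = last q \<Longrightarrow> p = q"
proof (induction p arbitrary: q)
  case Nil then show ?case by (simp add: is_path_def)
next
  case (Cons x ps)
  have qne: "q \<noteq> []" using Cons.prems by (simp add: is_path_def)
  then obtain q' where q: "q = x # q'" using Cons.prems(3) by (cases q) auto
  show ?case
  proof (cases ps)
    case Nil
    then have "hd q = last q" using Cons.prems by simp
    then have "q = [x]" using distinct_hd_last[of q] Cons.prems qne q by (simp add: is_path_def)
    then show ?thesis using Nil by simp
  next
    case (Cons y ys)
    note ps = this
    have p1: "x\<in>V" "(x,y)\<in>E" "x \<notin> set ps" "is_path V E ps"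
      using Cons.prems(1) ps path_Cons by metis+
    have q'ne: "q' \<noteq> []"
    proof
      assume "q' = []"
      then have "last ps = x" using Cons.prems(4) q ps by simp
      then show False using p1(3) ps by (metis last_in_set list.distinct(1))
    qed
    then obtain z zs where qz: "q' = z # zs" by (cases q') auto
    have q1: "(x,z)\<in>E" "x \<notin> set q'" "is_path V E q'"
      using Cons.prems(2) q qz path_Cons by metis+
    have lastq': "last ps = last q'" using Cons.prems(4) q ps q'ne by simp
    show ?thesis
    proof (cases "z = y")
      case True
      then have "ps = q'" using Cons.IH[OF p1(4) q1(3)] ps qz lastq' by simp
      then show ?thesis using q by simp
    next
      case False
      have "\<exists>w\<in>set ps. w \<in> set q'" using lastq' ps q'ne by (metis last_in_set list.distinct(1))
      then obtain A w B where psA: "ps = A @ w # B" and wq: "w \<in> set q'" and Aq: "\<forall>a\<in>set A. a \<notin> set q'"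
        using split_list_first_prop[of ps "\<lambda>w. w \<in> set q'"] by blast
      obtain C D where qC: "q' = C @ w # D" using wq split_list by metis
      have P1: "is_path V E (x # A @ [w])"
        using Cons.prems(1) psA path_prefix[of V E "x # A @ [w]" B] by simp
      have dq': "distinct q'" using q1(3) by (simp add: is_path_def)
      show ?thesis
      proof (cases "C = []")
        case True
        then have "w = z" using qC qz by simp
        then have "A \<noteq> []" using False psA ps by (cases A) auto
        then have "is_cycle V E (x # A @ [w])"
          using P1 \<open>w = z\<close> q1(1) graph_sym[OF G] by (cases A) (auto simp: is_cycle_def)
        then show ?thesis using noc by blast
      next
        case Cne: False
        have PC: "is_path V E C" using q1(3) qC path_prefix Cne by metis
        have PrC: "is_path V E (rev C)" using path_rev[OF G PC] .
        have ePC: "(last C, w) \<in> E" using q1(3) qC path_append[of C "w#D"] Cne by simp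
        have dis: "set (x # A @ [w]) \<inter> set (rev C) = {}"
          using q1(2) Aq dq' qC by auto
        have "is_path V E ((x # A @ [w]) @ rev C)"
          using path_append[of "x # A @ [w]" "rev C"] P1 PrC dis ePC Cne graph_sym[OF G] by (simp add: hd_rev)
        moreover have "hd C = z" using qC qz Cne by (cases C) auto
        ultimately have "is_cycle V E ((x # A @ [w]) @ rev C)"
          using q1(1) graph_sym[OF G] Cne by (cases C) (auto simp: is_cycle_def last_rev)
        then show ?thesis using noc by blast
      qed
    qed
  qed
qed

lemma tree_path:
  assumes T: "is_tree V E" and u: "u \<in> V" and v: "v \<in> V"
  shows "\<exists>p. is_path V E p \<and> hd p = u \<and> last p = v \<and> tree_path_set V E u v = set p"
proof -
  have G: "graph V E" and noc: "\<nexists>c. is_cycle V E c" using T by (auto simp: is_tree_def)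
  obtain p where p: "is_path V E p \<and> hd p = u \<and> last p = v" using T u v unfolding is_tree_def by blast
  have "(THE p. is_path V E p \<and> hd p = u \<and> last p = v) = p"
    using p path_unique[OF G noc] by (intro the_equality) metis+
  then show ?thesis using p by (auto simp: tree_path_set_def)
qed

lemma ivt_up: fixes f :: "'a \<Rightarrow> nat"
  shows "L \<noteq> [] \<Longrightarrow> f (hd L) < s \<Longrightarrow> s < f (last L) \<Longrightarrow> \<forall>x\<in>set L. f x \<noteq> s \<Longrightarrow>
   \<exists>i. Suc i < length L \<and> f (L!i) < s \<and> s < f (L!Suc i)"
proof (induction L)
  case Nil then show ?case by simp
next
  case (Cons x xs)
  show ?case
  proof (cases xs)
    case Nil with Cons show ?thesis by simp
  next
    case (Cons y ys)
    show ?thesis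
    proof (cases "s < f y")
      case True then show ?thesis using Cons.prems \<open>xs = y#ys\<close> by (intro exI[of _ 0]) auto
    next
      case False
      then have "f y < s" using Cons.prems \<open>xs = y#ys\<close> by (metis linorder_neqE_nat list.set_intros(1) list.set_intros(2))
      then obtain i where "Suc i < length xs \<and> f (xs!i) < s \<and> s < f (xs!Suc i)"
        using Cons.IH Cons.prems \<open>xs = y#ys\<close> by auto
      then show ?thesis by (intro exI[of _ "Suc i"]) auto
    qed
  qed
qed

lemma ivt_down: fixes f :: "'a \<Rightarrow> nat"
  shows "L \<noteq> [] \<Longrightarrow> s < f (hd L) \<Longrightarrow> f (last L) < s \<Longrightarrow> \<forall>x\<in>set L. f x \<noteq> s \<Longrightarrow>
   \<exists>i. Suc i < length L \<and> s < f (L!i) \<and> f (L!Suc i) < s"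
proof (induction L)
  case Nil then show ?case by simp
next
  case (Cons x xs)
  show ?case
  proof (cases xs)
    case Nil with Cons show ?thesis by simp
  next
    case (Cons y ys)
    show ?thesis
    proof (cases "f y < s")
      case True then show ?thesis using Cons.prems \<open>xs = y#ys\<close> by (intro exI[of _ 0]) auto
    next
      case False
      then have "s < f y" using Cons.prems \<open>xs = y#ys\<close> by (metis linorder_neqE_nat list.set_intros(1) list.set_intros(2))
      then obtain i where "Suc i < length xs \<and> s < f (xs!i) \<and> f (xs!Suc i) < s"
        using Cons.IH Cons.prems \<open>xs = y#ys\<close> by auto
      then show ?thesis by (intro exI[of _ "Suc i"]) auto
    qed
  qed
qed

theorem corollaryA11:
  fixes V :: "'a set" and E :: "('a \<times> 'a) set" and \<sigma> c :: "'a \<Rightarrow> nat"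
    and v0 v1 v2 v3 :: 'a
  assumes "is_tree V E"
    and "pthin V E = 2"
    and "inj_on \<sigma> V"
    and "c ` V = {0, 1}"
    and "strongly_consistent V E \<sigma> c"
    and "v1 \<in> V" "v2 \<in> V" "v3 \<in> V"
    and "\<sigma> v1 < \<sigma> v2" "\<sigma> v2 < \<sigma> v3"
    and "degree E v2 = 3"
    and "nexus V E v0 v1 v2 v3"
  shows "(v0, v2) \<in> E"
proof (rule ccontr)
  assume nadj: "(v0, v2) \<notin> E"
  have G: "graph V E" and noc: "\<nexists>c. is_cycle V E c" using assms(1) by (auto simp: is_tree_def)
  note sym = graph_sym[OF G]
  have inV: "\<And>u v. (u,v)\<in>E \<Longrightarrow> u \<in> V \<and> v \<in> V" using graph_V[OF G] .
  have irr: "\<And>u. (u,u)\<notin>E" using graph_irr[OF G] .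
  have v0V: "v0 \<in> V" and dist: "distinct [v0,v1,v2,v3]" using assms(12) by (auto simp: nexus_def)
  obtain p1 where p1: "is_path V E p1" "hd p1 = v0" "last p1 = v1" "tree_path_set V E v0 v1 = set p1"
    using tree_path[OF assms(1) v0V assms(6)] by blast
  obtain p2 where p2: "is_path V E p2" "hd p2 = v0" "last p2 = v2" "tree_path_set V E v0 v2 = set p2"
    using tree_path[OF assms(1) v0V assms(7)] by blast
  obtain p3 where p3: "is_path V E p3" "hd p3 = v0" "last p3 = v3" "tree_path_set V E v0 v3 = set p3"
    using tree_path[OF assms(1) v0V assms(8)] by blast
  have d12: "(set p1 - {v0}) \<inter> (set p2 - {v0}) = {}" and d23: "(set p3 - {v0}) \<inter> (set p2 - {v0}) = {}"
    using assms(12) p1(4) p2(4) p3(4) by (auto simp: nexus_def Let_def)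
  have p2ne: "p2 \<noteq> []" using p2(1) by (simp add: is_path_def)
  obtain D where p2D: "p2 = v0 # D" using p2ne p2(2) by (cases p2) auto
  have Dne: "D \<noteq> []" using p2D p2(3) dist by auto
  have PD: "is_path V E D" using p2(1) p2D Dne path_suffix[of V E "[v0]" D] by simp
  have v0D: "v0 \<notin> set D" using p2(1) p2D by (simp add: is_path_def)
  have ev0D: "(v0, hd D) \<in> E" using p2(1) p2D Dne by (cases D) (auto simp: path_Cons)
  have lastD: "last D = v2" using p2(3) p2D Dne by simp
  have key: "w \<noteq> v2 \<and> (v2,w) \<notin> E"
    if pp: "is_path V E p" "hd p = v0" "(set p - {v0}) \<inter> (set p2 - {v0}) = {}" "w \<in> set p" for p w
  proof
    have "v2 \<in> set p2 - {v0}" using p2(3) p2ne dist by auto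
    then show "w \<noteq> v2" using pp dist by auto
    show "(v2,w) \<notin> E"
    proof
      assume e: "(v2,w) \<in> E"
      show False
      proof (cases "w = v0")
        case True then show False using e nadj sym by blast
      next
        case False
        obtain A B where pA: "p = A @ w # B" using pp(4) split_list by metis
        have Ane: "A \<noteq> []" using pA pp(2) False by (cases A) auto
        have PA: "is_path V E (A @ [w])" using pp(1) pA path_prefix[of V E "A @ [w]" B] by simp
        have PrD: "is_path V E (rev D)" using path_rev[OF G PD] .
        have "set (A @ [w]) \<subseteq> set p" using pA by auto
        moreover have "set D \<subseteq> set p2 - {v0}" using p2D v0D by auto
        ultimately have dis: "set (A @ [w]) \<inter> set (rev D) = {}" using pp(3) by auto
        have "is_path V E ((A @ [w]) @ rev D)"
          using path_append[of "A @ [w]" "rev D"] PA PrD dis Dne e sym lastD by (simp add: hd_rev)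
        moreover have "hd A = v0" using pp(2) pA Ane by simp
        ultimately have "is_cycle V E ((A @ [w]) @ rev D)"
          using Ane Dne ev0D sym by (cases A; cases D) (auto simp: is_cycle_def last_rev)
        then show False using noc by blast
      qed
    qed
  qed
  have k1: "\<And>w. w \<in> set p1 \<Longrightarrow> w \<noteq> v2 \<and> (v2,w) \<notin> E" using key[OF p1(1) p1(2) d12] .
  have k3: "\<And>w. w \<in> set p3 \<Longrightarrow> w \<noteq> v2 \<and> (v2,w) \<notin> E" using key[OF p3(1) p3(2) d23] .
  have sne: "\<And>x. x \<in> V \<Longrightarrow> x \<noteq> v2 \<Longrightarrow> \<sigma> x \<noteq> \<sigma> v2"
    using assms(3) assms(7) by (meson inj_on_contraD)
  obtain r t where rt: "(r,t) \<in> E" "\<sigma> r < \<sigma> v2" "\<sigma> v2 < \<sigma> t" "(v2,r)\<notin>E" "(v2,t)\<notin>E"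
  proof (cases "\<sigma> v0 < \<sigma> v2")
    case True
    have "\<forall>x\<in>set p3. \<sigma> x \<noteq> \<sigma> v2" using k3 sne p3(1) by (auto simp: is_path_def)
    then obtain i where i: "Suc i < length p3" "\<sigma> (p3!i) < \<sigma> v2" "\<sigma> v2 < \<sigma> (p3!Suc i)"
      using ivt_up[of p3 \<sigma> "\<sigma> v2"] p3 True assms(10) by (auto simp: is_path_def)
    show ?thesis
      using that[of "p3!i" "p3!Suc i"] i p3(1) k3 by (simp add: is_path_def)
  next
    case False
    then have "\<sigma> v2 < \<sigma> v0" using sne v0V dist by fastforce
    have "\<forall>x\<in>set p1. \<sigma> x \<noteq> \<sigma> v2" using k1 sne p1(1) by (auto simp: is_path_def)
    then obtain i where i: "Suc i < length p1" "\<sigma> v2 < \<sigma> (p1!i)" "\<sigma> (p1!Suc i) < \<sigma> v2"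
      using ivt_down[of p1 "\<sigma> v2" \<sigma>] p1 \<open>\<sigma> v2 < \<sigma> v0\<close> assms(9) by (auto simp: is_path_def)
    show ?thesis
      using that[of "p1!Suc i" "p1!i"] i p1(1) k1 sym by (simp add: is_path_def)
  qed
  have SC: "\<And>r s t. r\<in>V \<Longrightarrow> s\<in>V \<Longrightarrow> t\<in>V \<Longrightarrow> \<sigma> r < \<sigma> s \<Longrightarrow> \<sigma> s < \<sigma> t \<Longrightarrow> (r,t) \<in> E \<Longrightarrow>
        (c r = c s \<longrightarrow> (s,t) \<in> E) \<and> (c s = c t \<longrightarrow> (r,s) \<in> E)"
    using assms(5) unfolding strongly_consistent_def by blast
  have bin: "\<And>x y z. x\<in>V \<Longrightarrow> y\<in>V \<Longrightarrow> z\<in>V \<Longrightarrow> c x \<noteq> c y \<Longrightarrow> c x \<noteq> c z \<Longrightarrow> c y = c z"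
  proof -
    fix x y z assume "x\<in>V" "y\<in>V" "z\<in>V" "c x \<noteq> c y" "c x \<noteq> c z"
    moreover have "c x \<in> {0,1}" "c y \<in> {0,1}" "c z \<in> {0,1}" using calculation assms(4) by blast+
    ultimately show "c y = c z" by auto
  qed
  have rV: "r \<in> V" and tV: "t \<in> V" using inV rt(1) by auto
  have crv: "c r \<noteq> c v2" and ctv: "c t \<noteq> c v2"
    using SC[OF rV assms(7) tV rt(2) rt(3) rt(1)] rt(4,5) sym by metis+
  have crt: "c r = c t" using bin[OF assms(7) rV tV] crv ctv by metis
  have tri: "False" if "(a,b)\<in>E" "(b,d)\<in>E" "(d,a)\<in>E" for a b d
  proof -
    have "a \<noteq> b" "b \<noteq> d" "a \<noteq> d" using that irr by auto
    moreover have "a\<in>V" "b\<in>V" "d\<in>V" using that inV by auto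
    ultimately have "is_cycle V E [a,b,d]" using that by (simp add: is_cycle_def path_Cons)
    then show False using noc by blast
  qed
  have nb: "c y = c v2" if y: "(v2,y) \<in> E" for y
  proof -
    have yV: "y \<in> V" using inV y by auto
    have "y \<noteq> r" "y \<noteq> t" "y \<noteq> v2" using y rt irr by auto
    then have syr: "\<sigma> y \<noteq> \<sigma> r" and syt: "\<sigma> y \<noteq> \<sigma> t"
      using assms(3) yV rV tV by (meson inj_on_contraD)+
    consider "\<sigma> y < \<sigma> r" | "\<sigma> r < \<sigma> y \<and> \<sigma> y < \<sigma> t" | "\<sigma> t < \<sigma> y"
      using syr syt by linarith
    then have "c y \<noteq> c r"
    proof cases
      case 1 then show ?thesis using SC[OF yV rV assms(7) _ rt(2)] y sym rt(4) by metis
    next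
      case 2
      show ?thesis
      proof
        assume "c y = c r"
        then have "(y,t)\<in>E" "(r,y)\<in>E" using SC[OF rV yV tV _ _ rt(1)] 2 crt by auto
        then show False using tri rt(1) sym by blast
      qed
    next
      case 3 then show ?thesis using SC[OF assms(7) tV yV rt(3)] y rt(5) crt by metis
    qed
    then show ?thesis using bin[OF rV yV assms(7)] crv by metis
  qed
  have side: False if "(v2,y1)\<in>E" "(v2,y2)\<in>E" "\<sigma> v2 < \<sigma> y1" "\<sigma> y1 < \<sigma> y2" for y1 y2
  proof -
    have "(y1,y2)\<in>E" using SC[of v2 y1 y2] that inV nb by auto
    then show False using tri that sym by blast
  qed
  have side2: False if "(v2,y1)\<in>E" "(v2,y2)\<in>E" "\<sigma> y2 < \<sigma> v2" "\<sigma> y1 < \<sigma> y2" for y1 y2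
  proof -
    have "(y1,y2)\<in>E" using SC[of y1 y2 v2] that inV nb sym by auto
    then show False using tri that sym by blast
  qed
  have same: False if "(v2,y1)\<in>E" "(v2,y2)\<in>E" "y1 \<noteq> y2" "(\<sigma> v2 < \<sigma> y1) = (\<sigma> v2 < \<sigma> y2)" for y1 y2
  proof -
    have "\<sigma> y1 \<noteq> \<sigma> y2" using that inV assms(3) by (meson inj_on_contraD)
    moreover have "\<sigma> y1 \<noteq> \<sigma> v2" "\<sigma> y2 \<noteq> \<sigma> v2" using that inV irr sne by blast+
    ultimately show False using side[OF that(1,2)] side[OF that(2,1)] side2[OF that(1,2)] side2[OF that(2,1)] that(4)
      by linarith
  qed
  have "card {u. (v2,u)\<in>E} = 3" using assms(11) by (simp add: degree_def)
  then obtain a b d where abd: "{u. (v2,u)\<in>E} = {a,b,d}" "a\<noteq>b" "b\<noteq>d" "a\<noteq>d"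
    by (auto simp: card_3_iff)
  then have "(v2,a)\<in>E" "(v2,b)\<in>E" "(v2,d)\<in>E" by blast+
  then show False using same abd by metis
qed

end
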